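(* Let $\epsilon\in(0,\frac12)$, $S\in\mathbb{R}^{m\times n}$, and $A\in\mathbb{R}^{n\times d}$ of full column rank, and let $SA=QR$ be a QR-decomposition of $SA$ (with $Q$ having orthonormal columns and $R\in\mathbb{R}^{d\times d}$ invertible). If $\|(AR^{-1})^\top AR^{-1}-I\|_{\mathrm{op}}\le\epsilon$, then $S$ is a $(1\pm\epsilon)$-subspace embedding of $\mathrm{col}(A)$, i.e., $(1-\epsilon)\|Ax\|_2\le\|SAx\|_2\le(1+\epsilon)\|Ax\|_2$ for all $x\in\mathbb{R}^d$.
   Context: $\|\cdot\|_{\mathrm{op}}$ is the spectral (operator) norm; $\mathrm{col}(A)$ is the column space of $A$. *)

theory Defs
  imports "HOL-Analysis.Analysis"
begin

definition op_norm :: "real^'c^'r \<Rightarrow> real" where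
  "op_norm M = onorm (\<lambda>x. M *v x)"

end

theory Submission
  imports Defs
begin

lemma minv_left:
  fixes R :: "real^'d^'d"
  assumes "invertible R"
  shows "matrix_inv R ** R = mat 1"
proof -
  have "\<exists>A'. R ** A' = mat 1 \<and> A' ** R = mat 1" using assms by (simp add: invertible_def)
  then have "R ** matrix_inv R = mat 1 \<and> matrix_inv R ** R = mat 1"
    unfolding matrix_inv_def by (rule someI_ex)
  then show ?thesis by simp
qed

lemma ortho_norm:
  fixes Q :: "real^'d^'m"
  assumes "transpose Q ** Q = mat 1"
  shows "norm (Q *v z) = norm z"
proof -
  have "(Q *v z) \<bullet> (Q *v z) = ((Q *v z) v* Q) \<bullet> z" by (metis dot_lmul_matrix inner_commute)
  also have "\<dots> = ((transpose Q ** Q) *v z) \<bullet> z"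
    by (metis transpose_matrix_vector matrix_vector_mul_assoc)
  also have "\<dots> = z \<bullet> z" using assms by simp
  finally show ?thesis by (simp add: norm_eq_sqrt_inner)
qed

theorem mainTheorem4:
  fixes \<epsilon> :: real
    and S :: "real^'n^'m"
    and A :: "real^'d^'n"
    and Q :: "real^'d^'m"
    and R :: "real^'d^'d"
  assumes "0 < \<epsilon>" and "\<epsilon> < 1/2"
    and "rank A = CARD('d)"
    and "transpose Q ** Q = mat 1"
    and "invertible R"
    and "S ** A = Q ** R"
    and "op_norm (transpose (A ** matrix_inv R) ** (A ** matrix_inv R) - mat 1) \<le> \<epsilon>"
  shows "\<forall>x :: real^'d.
           (1 - \<epsilon>) * norm (A *v x) \<le> norm ((S ** A) *v x) \<and>
           norm ((S ** A) *v x) \<le> (1 + \<epsilon>) * norm (A *v x)"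
proof
  fix x :: "real^'d"
  define B where "B = A ** matrix_inv R"
  define M where "M = transpose B ** B - mat 1"
  define y where "y = R *v x"
  have e1: "norm ((S ** A) *v x) = norm y"
    using assms(6) ortho_norm[OF assms(4)] by (simp add: y_def matrix_vector_mul_assoc[symmetric])
  have "B ** R = A"
    using minv_left[OF assms(5)] by (metis B_def matrix_mul_assoc matrix_mul_rid)
  then have e2: "A *v x = B *v y"
    by (metis y_def matrix_vector_mul_assoc)
  have "norm (M *v y) \<le> onorm (\<lambda>v. M *v v) * norm y"
    by (rule onorm) simp
  also have "\<dots> \<le> \<epsilon> * norm y"
    using assms(7) by (simp add: op_norm_def M_def B_def mult_right_mono)
  finally have nM: "norm (M *v y) \<le> \<epsilon> * norm y" .
  have "y \<bullet> (M *v y) = (B *v y) \<bullet> (B *v y) - y \<bullet> y"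
  proof -
    have "y \<bullet> ((transpose B ** B) *v y) = (B *v y) \<bullet> (B *v y)"
      by (metis dot_lmul_matrix inner_commute matrix_vector_mul_assoc transpose_matrix_vector)
    then show ?thesis by (simp add: M_def matrix_vector_mult_diff_rdistrib inner_diff_right)
  qed
  moreover have "\<bar>y \<bullet> (M *v y)\<bar> \<le> \<epsilon> * norm y^2"
  proof -
    have "\<bar>y \<bullet> (M *v y)\<bar> \<le> norm y * norm (M *v y)" by (rule Cauchy_Schwarz_ineq2)
    also have "\<dots> \<le> norm y * (\<epsilon> * norm y)" using nM by (simp add: mult_left_mono)
    finally show ?thesis by (simp add: power2_eq_square mult_ac)
  qed
  moreover have "(B *v y) \<bullet> (B *v y) = norm (A *v x)^2" "y \<bullet> y = norm y^2"
    using e2 by (simp_all add: power2_norm_eq_inner)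
  ultimately have "\<bar>norm (A *v x)^2 - norm y^2\<bar> \<le> \<epsilon> * norm y^2"
    by simp
  then have h1: "norm (A *v x)^2 \<le> (1+\<epsilon>) * norm y^2" and h2: "(1-\<epsilon>) * norm y^2 \<le> norm (A *v x)^2"
    by (auto simp: algebra_simps)
  define a where "a = norm (A *v x)"
  define b where "b = norm y"
  have a0: "a \<ge> 0" and b0: "b \<ge> 0" by (auto simp: a_def b_def)
  have h1': "a^2 \<le> (1+\<epsilon>) * b^2" and h2': "(1-\<epsilon>) * b^2 \<le> a^2" using h1 h2 by (auto simp: a_def b_def)
  have "((1-\<epsilon>)*a)^2 \<le> b^2"
  proof -
    have "((1-\<epsilon>)*a)^2 = (1-\<epsilon>)^2 * a^2" by (simp add: power_mult_distrib)
    also have "\<dots> \<le> (1-\<epsilon>)^2 * ((1+\<epsilon>) * b^2)" using h1' by (simp add: mult_left_mono)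
    also have "\<dots> = ((1-\<epsilon>)*(1-\<epsilon>^2)) * b^2" by (simp add: power2_eq_square algebra_simps)
    also have "\<dots> \<le> 1 * b^2"
      using assms(1,2) by (intro mult_right_mono) (auto simp: power2_eq_square mult_le_one)
    finally show ?thesis by simp
  qed
  then have c1: "(1-\<epsilon>)*a \<le> b" using b0 by (rule power2_le_imp_le)
  have "b^2 \<le> ((1+\<epsilon>)*a)^2"
  proof -
    have k: "1 \<le> (1-\<epsilon>)*(1+\<epsilon>)^2"
    proof -
      have "(1-\<epsilon>)*(1+\<epsilon>)^2 = 1 + \<epsilon>*(1 - \<epsilon> - \<epsilon>*\<epsilon>)" by (simp add: power2_eq_square algebra_simps)
      moreover have "\<epsilon>*\<epsilon> \<le> \<epsilon>/2" using assms(1,2) by (simp add: mult_left_mono less_imp_le)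
      moreover have "0 \<le> 1 - \<epsilon> - \<epsilon>*\<epsilon>" using calculation(2) assms(2) by linarith
      ultimately show ?thesis using assms(1) by simp
    qed
    have "1 * b^2 \<le> (1-\<epsilon>)*(1+\<epsilon>)^2 * b^2" by (rule mult_right_mono[OF k]) simp
    then have "b^2 \<le> (1-\<epsilon>)*(1+\<epsilon>)^2 * b^2" by (simp only: mult_1_left)
    also have "\<dots> = (1+\<epsilon>)^2 * ((1-\<epsilon>) * b^2)" by (simp only: mult_ac)
    also have "\<dots> \<le> (1+\<epsilon>)^2 * a^2" using h2' by (rule mult_left_mono) simp
    also have "\<dots> = ((1+\<epsilon>)*a)^2" by (simp only: power_mult_distrib)
    finally show ?thesis .
  qed
  then have c2: "b \<le> (1+\<epsilon>)*a" proof (rule power2_le_imp_le)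
    show "0 \<le> (1+\<epsilon>)*a" using a0 assms(1) by simp
  qed
  show "(1 - \<epsilon>) * norm (A *v x) \<le> norm ((S ** A) *v x) \<and>
           norm ((S ** A) *v x) \<le> (1 + \<epsilon>) * norm (A *v x)"
    using c1 c2 e1 unfolding a_def b_def by simp
qed

end
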